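(* Let $q\ge 2$ be an even integer. There is no generalized quadrangle of order $(q,q^2-q)$ admitting a group of automorphisms acting regularly on its point set.
   Context: A generalized quadrangle of order $(s,t)$ is an incidence structure of points and lines such that each point is on $t+1$ lines and two points lie on at most one common line, each line contains $s+1$ points and two lines share at most one point, and for any point $P$ and line $\ell$ not incident with $P$ there is exactly one point on $\ell$ collinear with $P$. A group acts regularly on the points if it acts (by collineations) transitively with trivial point stabilizers. *)

theory Defs
  imports "HOL-Algebra.Group_Action"
begin

text \<open>A generalized quadrangle of order (s,t): point set P, line set L, incidence I.
  Nonemptiness of the point set is part of the (standard) notion of a geometry.\<close>
definition gen_quadrangle ::
  "'p set \<Rightarrow> 'l set \<Rightarrow> ('p \<Rightarrow> 'l \<Rightarrow> bool) \<Rightarrow> nat \<Rightarrow> nat \<Rightarrow> bool" where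
  "gen_quadrangle P L I s t \<longleftrightarrow>
     P \<noteq> {} \<and>
     (\<forall>p\<in>P. card {l\<in>L. I p l} = t + 1) \<and>
     (\<forall>p\<in>P. \<forall>p'\<in>P. \<forall>l\<in>L. \<forall>l'\<in>L.
        p \<noteq> p' \<and> I p l \<and> I p' l \<and> I p l' \<and> I p' l' \<longrightarrow> l = l') \<and>
     (\<forall>l\<in>L. card {p\<in>P. I p l} = s + 1) \<and>
     (\<forall>l\<in>L. \<forall>l'\<in>L. \<forall>p\<in>P. \<forall>p'\<in>P.
        l \<noteq> l' \<and> I p l \<and> I p l' \<and> I p' l \<and> I p' l' \<longrightarrow> p = p') \<and>
     (\<forall>p\<in>P. \<forall>l\<in>L. \<not> I p l \<longrightarrow>
        (\<exists>!p'. p' \<in> P \<and> I p' l \<and> (\<exists>m\<in>L. I p m \<and> I p' m)))"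

definition collineation_action ::
  "('g, 'b) monoid_scheme \<Rightarrow> 'p set \<Rightarrow> 'l set \<Rightarrow> ('p \<Rightarrow> 'l \<Rightarrow> bool)
     \<Rightarrow> ('g \<Rightarrow> 'p \<Rightarrow> 'p) \<Rightarrow> ('g \<Rightarrow> 'l \<Rightarrow> 'l) \<Rightarrow> bool" where
  "collineation_action G P L I \<phi> \<psi> \<longleftrightarrow>
     group_action G P \<phi> \<and> group_action G L \<psi> \<and>
     (\<forall>g\<in>carrier G. \<forall>p\<in>P. \<forall>l\<in>L. I p l \<longleftrightarrow> I (\<phi> g p) (\<psi> g l))"

definition regular_on_points ::
  "('g, 'b) monoid_scheme \<Rightarrow> 'p set \<Rightarrow> ('g \<Rightarrow> 'p \<Rightarrow> 'p) \<Rightarrow> bool" where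
  "regular_on_points G P \<phi> \<longleftrightarrow>
     transitive_action G P \<phi> \<and> (\<forall>x\<in>P. stabilizer G \<phi> x = {\<one>\<^bsub>G\<^esub>})"

end

theory Submission imports Defs "Jordan_Normal_Form.Schur_Decomposition" "Berlekamp_Zassenhaus.Factor_Bound" "HOL-Algebra.Multiplicative_Group" begin

interpretation of_rat_poly_hom: map_poly_comm_ring_hom "of_rat :: rat \<Rightarrow> 'a::field_char_0" ..

definition mtr :: "'a::comm_ring_1 mat \<Rightarrow> 'a" where
  "mtr A = (\<Sum>i<dim_row A. A $$ (i,i))"

lemma mtr_mult_comm:
  fixes A B :: "'a::comm_ring_1 mat"
  assumes "A \<in> carrier_mat n n" "B \<in> carrier_mat n n"
  shows "mtr (A * B) = mtr (B * A)"
proof -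
  have "mtr (A * B) = (\<Sum>i<n. \<Sum>k<n. A $$ (i,k) * B $$ (k,i))"
    using assms by (simp add: mtr_def scalar_prod_def atLeast0LessThan)
  also have "\<dots> = (\<Sum>k<n. \<Sum>i<n. B $$ (k,i) * A $$ (i,k))"
    by (subst sum.swap) (simp add: mult.commute)
  also have "\<dots> = mtr (B * A)"
    using assms by (simp add: mtr_def scalar_prod_def atLeast0LessThan)
  finally show ?thesis .
qed

lemma mtr_similar:
  fixes A B :: "'a::comm_ring_1 mat"
  assumes "similar_mat_wit A B P Q"
  shows "mtr A = mtr B"
proof -
  from assms obtain n where c: "A \<in> carrier_mat n n" "B \<in> carrier_mat n n" "P \<in> carrier_mat n n" "Q \<in> carrier_mat n n"
    and QP: "Q * P = 1\<^sub>m n" and A: "A = P * B * Q"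
    unfolding similar_mat_wit_def Let_def by auto
  have "mtr A = mtr (P * (B * Q))" using A c by (simp add: assoc_mult_mat)
  also have "\<dots> = mtr ((B * Q) * P)" using c by (intro mtr_mult_comm) auto
  also have "(B * Q) * P = B" using c QP by (simp add: assoc_mult_mat)
  finally show ?thesis .
qed

lemma coeff_prod_linear:
  fixes es :: "'a::comm_ring_1 list"
  shows
  "Polynomial.coeff (\<Prod>e\<leftarrow>es. [:- e, 1:]) (length es) = 1 \<and>
   (es \<noteq> [] \<longrightarrow> Polynomial.coeff (\<Prod>e\<leftarrow>es. [:- e, 1:]) (length es - 1) = - sum_list es)"
proof (induction es)
  case Nil
  then show ?case by simp
next
  case (Cons e es)
  let ?q = "(\<Prod>e\<leftarrow>es. [:- e, 1:])"
  have dq: "degree ?q \<le> length es"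
    by (metis degree_linear_factors order.refl)
  have eq: "(\<Prod>e\<leftarrow>e#es. [:- e, 1:]) = smult (-e) ?q + pCons 0 ?q"
    by (simp add: mult_pCons_left)
  have c1: "Polynomial.coeff ?q (Suc (length es)) = 0" using dq by (simp add: coeff_eq_0)
  show ?case
  proof (cases es)
    case Nil
    then show ?thesis by simp
  next
    case (Cons a list)
    then show ?thesis using Cons.IH c1 unfolding eq
      by (auto simp: coeff_pCons algebra_simps split: nat.splits)
  qed
qed

lemma prod_list_dvd_prod_list:
  fixes f g :: "'b \<Rightarrow> 'a::comm_monoid_mult"
  assumes "\<And>x. x \<in> set xs \<Longrightarrow> f x dvd g x"
  shows "prod_list (map f xs) dvd prod_list (map g xs)"
  using assms by (induction xs) (auto intro: mult_dvd_mono)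

lemma prod_list_const: "prod_list (map (\<lambda>_. c) xs) = c ^ length xs"
  by (induction xs) auto

lemma trace_integral:
  fixes X :: "rat mat"
  assumes X: "X \<in> carrier_mat n n" and N: "N > 0" and pw: "X ^\<^sub>m Suc N = X"
  shows "mtr X \<in> \<int>"
proof -
  define Xc :: "complex mat" where "Xc = of_rat_hom.mat_hom X"
  have Xc: "Xc \<in> carrier_mat n n" using X by (simp add: Xc_def)
  have pwc: "Xc ^\<^sub>m Suc N = Xc"
    unfolding Xc_def of_rat_hom.mat_hom_pow[OF X, symmetric] pw ..
  obtain as where cp: "char_poly Xc = (\<Prod>a\<leftarrow>as. [:- a, 1:])" and las: "length as = n"
    using char_poly_factorized[OF Xc] by blast
  define Qr :: "rat poly" where "Qr = Polynomial.monom 1 (Suc N) + [:0,-1:]"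
  define Qi :: "int poly" where "Qi = Polynomial.monom 1 (Suc N) + [:0,-1:]"
  have root: "a ^ Suc N = a" if a: "a \<in> set as" for a
  proof -
    have "poly (char_poly Xc) a = 0" unfolding cp poly_prod_list
      using a by (auto simp: prod_list_zero_iff)
    then have "eigenvalue Xc a" using eigenvalue_root_char_poly[OF Xc] by simp
    then obtain w where ev: "eigenvector Xc w a" unfolding eigenvalue_def by blast
    have "Xc ^\<^sub>m Suc N *\<^sub>v w = a ^ Suc N \<cdot>\<^sub>v w" by (rule eigenvector_pow[OF Xc ev])
    then have e: "a ^ Suc N \<cdot>\<^sub>v w = a \<cdot>\<^sub>v w" using ev unfolding pwc eigenvector_def by simp
    from ev have w: "w \<in> carrier_vec n" "w \<noteq> 0\<^sub>v n" using Xc unfolding eigenvector_def by auto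
    then obtain i where i: "i < n" "w $ i \<noteq> 0"
      by (metis carrier_vecD eq_vecI index_zero_vec(1) index_zero_vec(2))
    from arg_cong[OF e, of "\<lambda>u. u $ i"] i w have "a ^ Suc N * w $ i = a * w $ i" by simp
    with i show ?thesis by simp
  qed
  have "char_poly Xc dvd (map_poly of_rat Qr) ^ n"
  proof -
    have mq: "map_poly of_rat Qr = (Polynomial.monom 1 (Suc N) + [:0,-1:] :: complex poly)"
      unfolding Qr_def by (simp add: of_rat_poly_hom.hom_add of_rat_hom.map_poly_pCons_hom)
    have "(\<Prod>a\<leftarrow>as. [:- a, 1:]) dvd (\<Prod>a\<leftarrow>as. map_poly of_rat Qr)"
    proof (rule prod_list_dvd_prod_list)
      fix a assume "a \<in> set as"
      then have "poly (map_poly of_rat Qr) a = 0" using root unfolding mq by (simp add: poly_monom)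
      then show "[:- a, 1:] dvd map_poly of_rat Qr" using poly_eq_0_iff_dvd by blast
    qed
    then show ?thesis unfolding cp prod_list_const las .
  qed
  then have "map_poly (of_rat :: rat \<Rightarrow> complex) (char_poly X) dvd map_poly of_rat (Qr ^ n)"
    unfolding Xc_def of_rat_hom.char_poly_hom[OF X] by (simp add: of_rat_poly_hom.hom_power)
  then have dv: "char_poly X dvd Qr ^ n" by (rule of_rat_hom.dvd_map_poly_hom_imp_dvd)
  have QrQi: "Qr ^ n = of_int_poly (Qi ^ n)" unfolding Qr_def Qi_def by (simp add: of_int_poly_hom.hom_power of_int_poly_hom.hom_add of_int_hom.map_poly_pCons_hom)
  from dv obtain h where "Qr ^ n = char_poly X * h" by (auto elim: dvdE)
  then have fac: "of_int_poly (Qi ^ n) = char_poly X * h" unfolding QrQi .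
  obtain r rg where rn: "rat_to_normalized_int_poly (char_poly X) = (r, rg)" by force
  from rat_to_int_factor_explicit[OF fac rn] obtain r' where Qf: "Qi ^ n = rg * smult (content (Qi ^ n)) r'" by blast
  have mon: "degree (char_poly X) = n \<and> Polynomial.coeff (char_poly X) n = 1" by (rule degree_monic_char_poly[OF X])
  have cpne: "char_poly X \<noteq> 0" using mon by auto
  note rg = rat_to_normalized_int_poly[OF rn]
  have dQi: "degree Qi = Suc N" unfolding Qi_def using N
    by (subst degree_add_eq_left) (auto simp: degree_monom_eq)
  have lcQi: "lead_coeff Qi = 1" unfolding dQi unfolding Qi_def using N
    by (cases N) (auto simp: coeff_monom)
  have "lead_coeff (Qi ^ n) = 1" by (simp add: lead_coeff_power lcQi)
  then have "lead_coeff rg * lead_coeff (smult (content (Qi ^ n)) r') = 1"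
    by (metis Qf lead_coeff_mult)
  then have "lead_coeff rg dvd 1" by (metis dvdI)
  then have "\<bar>lead_coeff rg\<bar> = 1" by (simp add: zdvd1_eq)
  then have lr: "lead_coeff rg = 1 \<or> lead_coeff rg = -1" by linarith
  have "lead_coeff (char_poly X) = 1" using mon by simp
  then have "r * of_int (lead_coeff rg) = 1" using rg(1) by (metis lead_coeff_smult of_int_hom.hom_lead_coeff)
  with lr rg(2) have r1: "r = 1" by auto
  have cpint: "char_poly X = of_int_poly rg" using rg(1) r1 by simp
  show ?thesis
  proof (cases "n = 0")
    case True
    then show ?thesis using X by (simp add: mtr_def)
  next
    case False
    obtain B P Q where sd: "schur_decomposition Xc as = (B,P,Q)" by (cases "schur_decomposition Xc as") auto
    from schur_decomposition[OF Xc cp sd] have sim: "similar_mat_wit Xc B P Q" and dB: "diag_mat B = as" by auto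
    have Bc: "B \<in> carrier_mat n n" using sim Xc unfolding similar_mat_wit_def Let_def by auto
    have "mtr Xc = mtr B" by (rule mtr_similar[OF sim])
    also have "\<dots> = sum_list as" unfolding dB[symmetric] diag_mat_def mtr_def using Bc
      by (simp add: sum_list_sum_nth atLeast0LessThan)
    finally have t1: "mtr Xc = sum_list as" .
    have "Polynomial.coeff (char_poly Xc) (n - 1) = - sum_list as"
      using coeff_prod_linear[of as] False las unfolding cp by auto
    moreover have "Polynomial.coeff (char_poly Xc) (n - 1) = of_rat (of_int (Polynomial.coeff rg (n - 1)))"
      unfolding Xc_def of_rat_hom.char_poly_hom[OF X] cpint by (simp add: coeff_map_poly)
    moreover have "mtr Xc = of_rat (mtr X)" unfolding Xc_def mtr_def using X
      by (simp add: of_rat_sum)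
    ultimately have "of_rat (mtr X) = (of_rat (- of_int (Polynomial.coeff rg (n - 1))) :: complex)"
      using t1 by (simp add: of_rat_minus) (metis minus_minus)
    then have "mtr X = - of_int (Polynomial.coeff rg (n - 1))" using of_rat_eq_iff by blast
    then show ?thesis by simp
  qed
qed

locale gq =
  fixes P :: "'p set" and L :: "'l set" and I :: "'p \<Rightarrow> 'l \<Rightarrow> bool" and s t :: nat
  assumes gq: "gen_quadrangle P L I s t"
begin

definition col :: "'p \<Rightarrow> 'p \<Rightarrow> bool" where
  "col x y \<longleftrightarrow> x \<noteq> y \<and> (\<exists>l\<in>L. I x l \<and> I y l)"

definition lines :: "'p \<Rightarrow> 'l set" where "lines x = {l\<in>L. I x l}"
definition pts :: "'l \<Rightarrow> 'p set" where "pts l = {p\<in>P. I p l}"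

lemmas gqd = gq[unfolded gen_quadrangle_def]
lemma nonempty: "P \<noteq> {}" using gqd[THEN conjunct1] .
lemma card_lines: "x \<in> P \<Longrightarrow> card (lines x) = t + 1"
  using gqd[THEN conjunct2, THEN conjunct1] unfolding lines_def by blast
lemma two_pts: "\<lbrakk>p \<in> P; p' \<in> P; l \<in> L; l' \<in> L; p \<noteq> p'; I p l; I p' l; I p l'; I p' l'\<rbrakk> \<Longrightarrow> l = l'"
  using gqd[THEN conjunct2, THEN conjunct2, THEN conjunct1] by blast
lemma card_pts: "l \<in> L \<Longrightarrow> card (pts l) = s + 1"
  using gqd[THEN conjunct2, THEN conjunct2, THEN conjunct2, THEN conjunct1] unfolding pts_def by blast
lemma gq_ax: "\<lbrakk>p \<in> P; l \<in> L; \<not> I p l\<rbrakk> \<Longrightarrow> \<exists>!p'. p' \<in> P \<and> I p' l \<and> (\<exists>m\<in>L. I p m \<and> I p' m)"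
  using gqd[THEN conjunct2, THEN conjunct2, THEN conjunct2, THEN conjunct2, THEN conjunct2] by blast

lemma finite_lines: "x \<in> P \<Longrightarrow> finite (lines x)"
  using card_lines by (metis card.infinite nat.distinct(1) add_is_0 one_neq_zero)
lemma finite_pts: "l \<in> L \<Longrightarrow> finite (pts l)"
  using card_pts by (metis card.infinite add_is_0 one_neq_zero)
lemma lines_ne: "x \<in> P \<Longrightarrow> lines x \<noteq> {}"
  using card_lines by fastforce

lemma finite_P: "finite P"
proof -
  obtain x0 where x0: "x0 \<in> P" using nonempty by blast
  obtain l0 where l0: "l0 \<in> lines x0" using lines_ne[OF x0] by blast
  have l0L: "l0 \<in> L" using l0 unfolding lines_def by auto
  have "P \<subseteq> (\<Union>p\<in>pts l0. \<Union>m\<in>lines p. pts m)"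
  proof
    fix y assume y: "y \<in> P"
    show "y \<in> (\<Union>p\<in>pts l0. \<Union>m\<in>lines p. pts m)"
    proof (cases "I y l0")
      case True
      then show ?thesis using y l0L by (auto simp: pts_def lines_def)
    next
      case False
      then obtain p' m where "p' \<in> P" "I p' l0" "m \<in> L" "I y m" "I p' m"
        using gq_ax[OF y l0L] by blast
      then show ?thesis using y l0L by (auto simp: pts_def lines_def)
    qed
  qed
  moreover have "finite (\<Union>p\<in>pts l0. \<Union>m\<in>lines p. pts m)"
    using finite_pts[OF l0L] finite_lines finite_pts unfolding pts_def lines_def
    by (intro finite_UN_I) auto
  ultimately show ?thesis by (rule finite_subset)
qed

lemma col_sym: "col x y \<Longrightarrow> col y x" unfolding col_def by auto

lemma neighbours_card:
  assumes x: "x \<in> P"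
  shows "card {y\<in>P. col x y} = s * (t + 1)"
proof -
  have eq: "{y\<in>P. col x y} = (\<Union>l\<in>lines x. pts l - {x})"
    unfolding col_def lines_def pts_def by auto
  have "card (\<Union>l\<in>lines x. pts l - {x}) = (\<Sum>l\<in>lines x. card (pts l - {x}))"
  proof (rule card_UN_disjoint)
    show "finite (lines x)" using finite_lines[OF x] .
    show "\<forall>l\<in>lines x. finite (pts l - {x})" using finite_pts by (auto simp: lines_def)
    show "\<forall>l\<in>lines x. \<forall>l'\<in>lines x. l \<noteq> l' \<longrightarrow> (pts l - {x}) \<inter> (pts l' - {x}) = {}"
      using two_pts x unfolding lines_def pts_def by blast
  qed
  also have "\<dots> = (\<Sum>l\<in>lines x. s)"
  proof (rule sum.cong)
    fix l assume l: "l \<in> lines x"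
    then have "x \<in> pts l" "l \<in> L" using x by (auto simp: lines_def pts_def)
    then show "card (pts l - {x}) = s" using card_pts finite_pts by simp
  qed simp
  also have "\<dots> = s * (t + 1)" using card_lines[OF x] by simp
  finally show ?thesis using eq by simp
qed

lemma common_col:
  assumes x: "x \<in> P" and y: "y \<in> P" and c: "col x y"
  shows "card {z\<in>P. col x z \<and> col y z} = s - 1"
proof -
  from c obtain l where l: "l \<in> L" "I x l" "I y l" "x \<noteq> y" unfolding col_def by blast
  have eq: "{z\<in>P. col x z \<and> col y z} = pts l - {x, y}"
  proof
    show "pts l - {x, y} \<subseteq> {z\<in>P. col x z \<and> col y z}"
      using l unfolding pts_def col_def by auto
    show "{z\<in>P. col x z \<and> col y z} \<subseteq> pts l - {x, y}"
    proof
      fix z assume z: "z \<in> {z\<in>P. col x z \<and> col y z}"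
      then obtain m1 m2 where m: "m1 \<in> L" "I x m1" "I z m1" "m2 \<in> L" "I y m2" "I z m2" "z \<noteq> x" "z \<noteq> y" "z \<in> P"
        unfolding col_def by blast
      show "z \<in> pts l - {x, y}"
      proof (rule ccontr)
        assume "z \<notin> pts l - {x, y}"
        then have nz: "\<not> I z l" using m unfolding pts_def by auto
        from gq_ax[OF m(9) l(1) nz] have "\<exists>!p'. p' \<in> P \<and> I p' l \<and> (\<exists>m\<in>L. I z m \<and> I p' m)" .
        moreover have "x \<in> P \<and> I x l \<and> (\<exists>m\<in>L. I z m \<and> I x m)" using x l m by blast
        moreover have "y \<in> P \<and> I y l \<and> (\<exists>m\<in>L. I z m \<and> I y m)" using y l m by blast
        ultimately show False using l(4) by blast
      qed
    qed
  qed
  have "x \<in> pts l" "y \<in> pts l" using l x y by (auto simp: pts_def)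
  then have "card (pts l - {x, y}) = s + 1 - 2"
    using finite_pts[OF l(1)] card_pts[OF l(1)] l(4) by (simp add: card_Diff_subset)
  then show ?thesis using eq by simp
qed

lemma common_noncol:
  assumes x: "x \<in> P" and y: "y \<in> P" and xy: "x \<noteq> y" and nc: "\<not> col x y"
  shows "card {z\<in>P. col x z \<and> col y z} = t + 1"
proof -
  define f where "f m = (THE p'. p' \<in> P \<and> I p' m \<and> (\<exists>m'\<in>L. I x m' \<and> I p' m'))" for m
  have nI: "\<not> I x m" if "m \<in> lines y" for m
    using that nc xy unfolding col_def lines_def by auto
  have fprop: "f m \<in> P \<and> I (f m) m \<and> (\<exists>m'\<in>L. I x m' \<and> I (f m) m')" if m: "m \<in> lines y" for m
  proof -
    have "m \<in> L" using m by (auto simp: lines_def)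
    from gq_ax[OF x this nI[OF m]] show ?thesis unfolding f_def by (rule theI')
  qed
  have funiq: "f m = p'" if m: "m \<in> lines y" and p': "p' \<in> P" "I p' m" "\<exists>m'\<in>L. I x m' \<and> I p' m'" for m p'
  proof -
    have "m \<in> L" using m by (auto simp: lines_def)
    from gq_ax[OF x this nI[OF m]] fprop[OF m] p' show ?thesis by blast
  qed
  have "bij_betw f (lines y) {z\<in>P. col x z \<and> col y z}"
  proof (rule bij_betwI')
    fix m1 m2 assume m: "m1 \<in> lines y" "m2 \<in> lines y"
    show "(f m1 = f m2) = (m1 = m2)"
    proof
      assume e: "f m1 = f m2"
      have fy: "f m1 \<noteq> y"
      proof
        assume "f m1 = y"
        then show False using fprop[OF m(1)] nc xy unfolding col_def by auto
      qed
      show "m1 = m2"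
        using two_pts[of "f m1" y m1 m2] fprop[OF m(1)] fprop[OF m(2)] e y fy m
        unfolding lines_def by auto
    qed simp
  next
    fix m assume m: "m \<in> lines y"
    have fx: "f m \<noteq> x" using fprop[OF m] nI[OF m] by auto
    have fy: "f m \<noteq> y"
    proof
      assume "f m = y"
      then show False using fprop[OF m] nc xy unfolding col_def by auto
    qed
    have mL: "m \<in> L" "I y m" using m by (auto simp: lines_def)
    have "col x (f m)" unfolding col_def using fprop[OF m] fx by blast
    moreover have "col y (f m)" unfolding col_def using fprop[OF m] fy mL by blast
    ultimately show "f m \<in> {z\<in>P. col x z \<and> col y z}" using fprop[OF m] by blast
  next
    fix z assume z: "z \<in> {z\<in>P. col x z \<and> col y z}"
    then obtain m where m: "m \<in> L" "I y m" "I z m" unfolding col_def by blast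
    have ml: "m \<in> lines y" using m by (auto simp: lines_def)
    have "f m = z" using funiq[OF ml] z m unfolding col_def by blast
    then show "\<exists>m\<in>lines y. z = f m" using ml by auto
  qed
  then have "card {z\<in>P. col x z \<and> col y z} = card (lines y)" by (simp add: bij_betw_same_card)
  then show ?thesis using card_lines[OF y] by simp
qed

end

lemma sum_if_card:
  assumes "finite A"
  shows "(\<Sum>x\<in>A. if Q x then (1::rat) else 0) = of_nat (card {x\<in>A. Q x})"
proof -
  have "(\<Sum>x\<in>A. if Q x then (1::rat) else 0) = (\<Sum>x\<in>{x\<in>A. Q x}. 1)"
    using sum.inter_filter[OF assms, of "\<lambda>_. (1::rat)" Q] by simp
  then show ?thesis by simp
qed

context gq
begin

definition v where "v = card P"
definition e where "e = (SOME h. bij_betw h {0..<card P} P)"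
definition ei where "ei = the_inv_into {0..<v} e"

lemma e_bij: "bij_betw e {0..<v} P"
proof -
  have "\<exists>h. bij_betw h {0..<card P} P" by (rule ex_bij_betw_nat_finite[OF finite_P])
  then show ?thesis unfolding e_def v_def by (rule someI_ex)
qed

lemma e_in: "i < v \<Longrightarrow> e i \<in> P" using e_bij by (auto simp: bij_betw_def)
lemma ei_lt: "x \<in> P \<Longrightarrow> ei x < v" unfolding ei_def
  using e_bij by (metis atLeastLessThan_iff bij_betw_def the_inv_into_into order.refl)
lemma e_ei: "x \<in> P \<Longrightarrow> e (ei x) = x" unfolding ei_def
  using e_bij by (metis bij_betw_def f_the_inv_into_f)
lemma ei_e: "i < v \<Longrightarrow> ei (e i) = i" unfolding ei_def
  using e_bij by (metis atLeastLessThan_iff bij_betw_def the_inv_into_f_f zero_le)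
lemma e_inj: "i < v \<Longrightarrow> j < v \<Longrightarrow> e i = e j \<longleftrightarrow> i = j" using ei_e by metis

lemma v_pos: "v > 0" unfolding v_def using finite_P nonempty by (simp add: card_gt_0_iff)

lemma sum_P: "(\<Sum>l<v. f (e l)) = (\<Sum>x\<in>P. f x)"
  using sum.reindex_bij_betw[OF e_bij, of f] by (simp add: lessThan_atLeast0)

definition am :: "nat \<Rightarrow> nat \<Rightarrow> rat" where "am i j = (if col (e i) (e j) then 1 else 0)"
definition dl :: "nat \<Rightarrow> nat \<Rightarrow> rat" where "dl i j = (if i = j then 1 else 0)"

lemma col_irrefl: "\<not> col x x" unfolding col_def by auto

lemma am_sym: "am i j = am j i" unfolding am_def using col_sym by metis
lemma am_diag: "am i i = 0" unfolding am_def using col_irrefl by simp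

lemma sum_am: assumes "i < v" shows "(\<Sum>l<v. am i l) = of_nat (s * (t + 1))"
proof -
  have "(\<Sum>l<v. am i l) = (\<Sum>x\<in>P. if col (e i) x then (1::rat) else 0)"
    unfolding am_def by (rule sum_P)
  also have "\<dots> = of_nat (card {x\<in>P. col (e i) x})" by (rule sum_if_card[OF finite_P])
  also have "\<dots> = of_nat (s * (t + 1))" using neighbours_card[OF e_in[OF assms]] by simp
  finally show ?thesis .
qed

lemma sum_am': assumes "j < v" shows "(\<Sum>l<v. am l j) = of_nat (s * (t + 1))"
  using sum_am[OF assms] by (simp add: am_sym)

lemma sum_dl_left: assumes "j < v" shows "(\<Sum>l<v. dl j l * f l) = f j"
proof -
  have "(\<Sum>l<v. dl j l * f l) = (\<Sum>l<v. if l = j then f l else 0)"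
    by (rule sum.cong) (auto simp: dl_def)
  then show ?thesis using assms by (simp add: sum.delta')
qed
lemma sum_dl_right: assumes "j < v" shows "(\<Sum>l<v. f l * dl l j) = f j"
proof -
  have "(\<Sum>l<v. f l * dl l j) = (\<Sum>l<v. if l = j then f l else 0)"
    by (rule sum.cong) (auto simp: dl_def)
  then show ?thesis using assms by (simp add: sum.delta')
qed

lemma sum_am_am:
  assumes i: "i < v" and j: "j < v" and s1: "s \<ge> 1"
  shows "(\<Sum>l<v. am i l * am l j) =
     of_nat t + 1 + (of_nat (s * (t + 1)) - (of_nat t + 1)) * dl i j + ((of_nat s - 1) - (of_nat t + 1)) * am i j"
proof -
  have "(\<Sum>l<v. am i l * am l j) = (\<Sum>x\<in>P. if col (e i) x \<and> col x (e j) then (1::rat) else 0)"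
  proof -
    have "(\<Sum>l<v. am i l * am l j) = (\<Sum>l<v. if col (e i) (e l) \<and> col (e l) (e j) then (1::rat) else 0)"
      by (rule sum.cong) (auto simp: am_def)
    then show ?thesis using sum_P[of "\<lambda>x. if col (e i) x \<and> col x (e j) then (1::rat) else 0"] by simp
  qed
  also have "\<dots> = of_nat (card {x\<in>P. col (e i) x \<and> col x (e j)})" by (rule sum_if_card[OF finite_P])
  finally have eq: "(\<Sum>l<v. am i l * am l j) = of_nat (card {x\<in>P. col (e i) x \<and> col x (e j)})" .
  have cs: "{x\<in>P. col (e i) x \<and> col x (e j)} = {x\<in>P. col (e i) x \<and> col (e j) x}"
    using col_sym by blast
  show ?thesis
  proof (cases "i = j")
    case True
    have "{x\<in>P. col (e i) x \<and> col x (e j)} = {x\<in>P. col (e i) x}" using True col_sym by blast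
    then show ?thesis using eq True neighbours_card[OF e_in[OF i]] am_diag by (simp add: dl_def)
  next
    case False
    then have ne: "e i \<noteq> e j" using e_inj i j by simp
    show ?thesis
    proof (cases "col (e i) (e j)")
      case True
      then show ?thesis using eq cs common_col[OF e_in[OF i] e_in[OF j] True] False s1
        by (simp add: dl_def am_def of_nat_diff)
    next
      case nc: False
      then show ?thesis using eq cs common_noncol[OF e_in[OF i] e_in[OF j] ne nc] False
        by (simp add: dl_def am_def)
    qed
  qed
qed

lemma v_formula:
  assumes s1: "s \<ge> 1"
  shows "v = (s + 1) * (s * t + 1)"
proof -
  define k :: rat where "k = of_nat (s * (t + 1))"
  define T :: rat where "T = of_nat t + 1"
  have i: "0 < v" by (rule v_pos)
  have "(\<Sum>j<v. \<Sum>l<v. am 0 l * am l j) = (\<Sum>l<v. am 0 l * (\<Sum>j<v. am l j))"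
    by (subst sum.swap) (simp add: sum_distrib_left)
  also have "\<dots> = (\<Sum>l<v. am 0 l * k)" using sum_am unfolding k_def by simp
  also have "\<dots> = k * k" using sum_am[OF i] unfolding k_def by (simp add: sum_distrib_right[symmetric])
  finally have lhs: "(\<Sum>j<v. \<Sum>l<v. am 0 l * am l j) = k * k" .
  have "(\<Sum>j<v. \<Sum>l<v. am 0 l * am l j) = (\<Sum>j<v. T + (k - T) * dl 0 j + ((of_nat s - 1) - T) * am 0 j)"
    using sum_am_am[OF i _ s1] unfolding k_def T_def by simp
  also have "\<dots> = of_nat v * T + (k - T) + ((of_nat s - 1) - T) * k"
    using sum_dl_left[OF i, of "\<lambda>_. 1"] sum_am[OF i]
    by (simp add: sum.distrib sum_distrib_left[symmetric] k_def)
  finally have "k * k = of_nat v * T + (k - T) + ((of_nat s - 1) - T) * k" using lhs by simp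
  then have "of_nat v * T = ((of_nat s + 1) * (of_nat s * of_nat t + 1)) * T"
    unfolding k_def T_def by (simp add: algebra_simps)
  then have "(of_nat v :: rat) = (of_nat s + 1) * (of_nat s * of_nat t + 1)"
    unfolding T_def by (simp add: add_pos_pos)
  then have "(of_nat v :: rat) = of_nat ((s + 1) * (s * t + 1))" by (simp only: of_nat_mult of_nat_add of_nat_1)
  then show ?thesis using of_nat_eq_iff by blast
qed

definition Tq :: rat where "Tq = of_nat t + 1"
definition kq :: rat where "kq = of_nat (s * (t + 1))"
definition cq :: rat where "cq = (kq + Tq) / of_nat v"
definition iQ :: rat where "iQ = 1 / (of_nat s + of_nat t)"
definition F :: "nat \<Rightarrow> nat \<Rightarrow> rat" where "F i j = (am i j + Tq * dl i j - cq) * iQ"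

lemma FF:
  assumes i: "i < v" and j: "j < v" and s1: "s \<ge> 1"
  shows "(\<Sum>l<v. F i l * F l j) = F i j"
proof -
  have pw: "F i l * F l j = iQ^2 * (am i l * am l j + Tq * (am i l * dl l j) - cq * am i l + Tq * (dl i l * am l j)
     + Tq^2 * (dl i l * dl l j) - (Tq*cq) * dl i l - cq * am l j - (Tq*cq) * dl l j + cq^2)" for l
    unfolding F_def by (simp add: algebra_simps power2_eq_square)
  have "(\<Sum>l<v. F i l * F l j) = iQ^2 * ((\<Sum>l<v. am i l * am l j) + Tq * (\<Sum>l<v. am i l * dl l j) - cq * (\<Sum>l<v. am i l)
     + Tq * (\<Sum>l<v. dl i l * am l j) + Tq^2 * (\<Sum>l<v. dl i l * dl l j) - (Tq*cq) * (\<Sum>l<v. dl i l * 1)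
     - cq * (\<Sum>l<v. am l j) - (Tq*cq) * (\<Sum>l<v. 1 * dl l j) + of_nat v * cq^2)"
    unfolding pw by (simp only: sum_distrib_left[symmetric] sum.distrib sum_subtractf sum_constant card_lessThan mult_1_right mult_1_left)
  also have "\<dots> = iQ^2 * ((Tq + (kq - Tq) * dl i j + ((of_nat s - 1) - Tq) * am i j) + Tq * am i j - cq * kq
     + Tq * am i j + Tq^2 * dl i j - (Tq*cq) - cq * kq - (Tq*cq) + of_nat v * cq^2)"
    using sum_am_am[OF i j s1] sum_dl_right[OF j, of "am i"] sum_dl_left[OF i, of "\<lambda>l. am l j"]
      sum_dl_left[OF i, of "\<lambda>l. dl l j"] sum_dl_left[OF i, of "\<lambda>l. 1"] sum_dl_right[OF j, of "\<lambda>l. 1"]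
      sum_am[OF i] sum_am'[OF j]
    unfolding kq_def Tq_def by simp
  also have "\<dots> = F i j"
  proof -
    have vf: "(of_nat v :: rat) = (of_nat s + 1) * (of_nat s * of_nat t + 1)"
      using v_formula[OF s1] by (simp add: algebra_simps)
    have vpos: "(of_nat v :: rat) > 0" using v_pos by simp
    have Qpos: "(of_nat s + of_nat t :: rat) > 0" using s1 by simp
    have c: "cq * of_nat v = kq + Tq" unfolding cq_def using vpos by simp
    have c2: "of_nat v * cq^2 = (kq + Tq) * cq" using c by (metis mult.assoc mult.commute power2_eq_square)
    have kT: "kq + Tq = (of_nat s + 1) * Tq" unfolding kq_def Tq_def by (simp add: algebra_simps)
    have key: "Tq - (kq + Tq) * cq = - (of_nat s + of_nat t) * cq"
    proof -
      have "(Tq - (kq + Tq) * cq) * of_nat v = Tq * of_nat v - (kq + Tq) * (cq * of_nat v)"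
        by (simp add: algebra_simps)
      also have "\<dots> = Tq * of_nat v - (kq + Tq) * (kq + Tq)" unfolding c ..
      also have "\<dots> = - (of_nat s + of_nat t) * (kq + Tq)"
        unfolding vf kT unfolding Tq_def by (simp add: algebra_simps)
      also have "\<dots> = (- (of_nat s + of_nat t)) * (cq * of_nat v)" unfolding c ..
      also have "\<dots> = (- (of_nat s + of_nat t) * cq) * of_nat v" by (simp add: algebra_simps)
      finally show ?thesis using vpos by simp
    qed
    have iq: "iQ * (of_nat s + of_nat t) = 1" unfolding iQ_def using Qpos by simp
    define Q :: rat where "Q = of_nat s + of_nat t"
    have inner: "(Tq + (kq - Tq) * dl i j + ((of_nat s - 1) - Tq) * am i j) + Tq * am i j - cq * kq
     + Tq * am i j + Tq^2 * dl i j - (Tq*cq) - cq * kq - (Tq*cq) + (kq + Tq) * cq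
     = Q * (am i j + Tq * dl i j - cq) + (Tq - (kq + Tq) * cq + Q * cq)"
      unfolding Q_def kq_def Tq_def by (simp add: algebra_simps power2_eq_square)
    have z: "Tq - (kq + Tq) * cq + Q * cq = 0" using key unfolding Q_def by (simp add: algebra_simps)
    have iq2: "iQ^2 * Q = iQ" using iq unfolding Q_def by (simp add: power2_eq_square)
    show ?thesis unfolding F_def c2 inner z
      by (metis add_0_right iq2 mult.assoc mult.commute)
  qed
  finally show ?thesis .
qed

end

locale gqa = gq P L I s t for P :: "'p set" and L :: "'l set" and I and s t +
  fixes G :: "('g, 'b) monoid_scheme" and \<phi> :: "'g \<Rightarrow> 'p \<Rightarrow> 'p" and \<psi> :: "'g \<Rightarrow> 'l \<Rightarrow> 'l"
  assumes coll: "collineation_action G P L I \<phi> \<psi>"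
    and reg: "regular_on_points G P \<phi>"
    and s1: "s \<ge> 1"
begin

lemma ga: "group_action G P \<phi>" using coll unfolding collineation_action_def by blast
lemma gaL: "group_action G L \<psi>" using coll unfolding collineation_action_def by blast
lemma inc: "g \<in> carrier G \<Longrightarrow> p \<in> P \<Longrightarrow> l \<in> L \<Longrightarrow> I p l \<longleftrightarrow> I (\<phi> g p) (\<psi> g l)"
  using coll unfolding collineation_action_def by blast
lemma grp: "group G" using ga unfolding group_action_def group_hom_def by blast
lemma ta: "transitive_action G P \<phi>" using reg unfolding regular_on_points_def by blast
lemma stab: "x \<in> P \<Longrightarrow> stabilizer G \<phi> x = {\<one>\<^bsub>G\<^esub>}" using reg unfolding regular_on_points_def by blast

lemma phi_in: "g \<in> carrier G \<Longrightarrow> x \<in> P \<Longrightarrow> \<phi> g x \<in> P"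
  using group_action.element_image[OF ga] by blast
lemma psi_in: "g \<in> carrier G \<Longrightarrow> l \<in> L \<Longrightarrow> \<psi> g l \<in> L"
  using group_action.element_image[OF gaL] by blast
lemma phi_inj: "g \<in> carrier G \<Longrightarrow> x \<in> P \<Longrightarrow> y \<in> P \<Longrightarrow> \<phi> g x = \<phi> g y \<longleftrightarrow> x = y"
  using group_action.inj_prop[OF ga] by (meson inj_on_eq_iff)
lemma phi_mult: "g \<in> carrier G \<Longrightarrow> h \<in> carrier G \<Longrightarrow> x \<in> P \<Longrightarrow> \<phi> (g \<otimes>\<^bsub>G\<^esub> h) x = \<phi> g (\<phi> h x)"
  using group_action.composition_rule[OF ga] by blast
lemma phi_one: "x \<in> P \<Longrightarrow> \<phi> \<one>\<^bsub>G\<^esub> x = x"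
  using group_action.id_eq_one[OF ga] by (metis restrict_apply')
lemma phi_inv: "g \<in> carrier G \<Longrightarrow> x \<in> P \<Longrightarrow> \<phi> (inv\<^bsub>G\<^esub> g) (\<phi> g x) = x"
  using phi_mult[of "inv\<^bsub>G\<^esub> g" g x] phi_one grp by (simp add: group.l_inv group.inv_closed)
lemma phi_inv2: "g \<in> carrier G \<Longrightarrow> x \<in> P \<Longrightarrow> \<phi> g (\<phi> (inv\<^bsub>G\<^esub> g) x) = x"
  using phi_mult[of g "inv\<^bsub>G\<^esub> g" x] phi_one grp by (simp add: group.r_inv group.inv_closed)

lemma col_phi1: assumes g: "g \<in> carrier G" and x: "x \<in> P" and y: "y \<in> P" and c: "col x y"
  shows "col (\<phi> g x) (\<phi> g y)"
proof -
  from c obtain l where l: "l \<in> L" "I x l" "I y l" "x \<noteq> y" unfolding col_def by blast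
  have "\<phi> g x \<noteq> \<phi> g y" using phi_inj[OF g x y] l by simp
  moreover have "\<psi> g l \<in> L" using psi_in[OF g l(1)] .
  moreover have "I (\<phi> g x) (\<psi> g l)" "I (\<phi> g y) (\<psi> g l)" using inc[OF g] x y l by auto
  ultimately show ?thesis unfolding col_def by blast
qed

lemma col_phi: assumes g: "g \<in> carrier G" and x: "x \<in> P" and y: "y \<in> P"
  shows "col (\<phi> g x) (\<phi> g y) \<longleftrightarrow> col x y"
proof
  assume "col (\<phi> g x) (\<phi> g y)"
  from col_phi1[OF _ phi_in[OF g x] phi_in[OF g y] this, of "inv\<^bsub>G\<^esub> g"] g x y grp
  show "col x y" by (simp add: phi_inv group.inv_closed)
qed (rule col_phi1[OF g x y])

definition pi :: "'g \<Rightarrow> nat \<Rightarrow> nat" where "pi g i = ei (\<phi> g (e i))"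

lemma pi_lt: "g \<in> carrier G \<Longrightarrow> i < v \<Longrightarrow> pi g i < v"
  unfolding pi_def by (simp add: ei_lt phi_in e_in)
lemma e_pi: "g \<in> carrier G \<Longrightarrow> i < v \<Longrightarrow> e (pi g i) = \<phi> g (e i)"
  unfolding pi_def by (simp add: e_ei phi_in e_in)
lemma pi_comp: "g \<in> carrier G \<Longrightarrow> h \<in> carrier G \<Longrightarrow> i < v \<Longrightarrow> pi g (pi h i) = pi (g \<otimes>\<^bsub>G\<^esub> h) i"
  unfolding pi_def by (simp add: e_ei phi_in e_in phi_mult)
lemma pi_inv_eq: assumes g: "g \<in> carrier G" and i: "i < v" and j: "j < v"
  shows "pi g i = j \<longleftrightarrow> i = pi (inv\<^bsub>G\<^esub> g) j"
proof -
  have gi: "inv\<^bsub>G\<^esub> g \<in> carrier G" using grp g by (simp add: group.inv_closed)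
  have "pi g i = j \<longleftrightarrow> e (pi g i) = e j" using e_inj pi_lt g i j by blast
  also have "\<dots> \<longleftrightarrow> \<phi> g (e i) = e j" using e_pi g i by simp
  also have "\<dots> \<longleftrightarrow> e i = \<phi> (inv\<^bsub>G\<^esub> g) (e j)"
    using phi_inv phi_inv2 g e_in i j by metis
  also have "\<dots> \<longleftrightarrow> e i = e (pi (inv\<^bsub>G\<^esub> g) j)" using e_pi gi j by simp
  also have "\<dots> \<longleftrightarrow> i = pi (inv\<^bsub>G\<^esub> g) j" using e_inj pi_lt gi i j by blast
  finally show ?thesis .
qed

lemma am_pi: assumes g: "g \<in> carrier G" and i: "i < v" and j: "j < v"
  shows "am (pi g i) j = am i (pi (inv\<^bsub>G\<^esub> g) j)"
proof -
  have gi: "inv\<^bsub>G\<^esub> g \<in> carrier G" using grp g by (simp add: group.inv_closed)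
  have "col (e (pi g i)) (e j) \<longleftrightarrow> col (\<phi> g (e i)) (\<phi> g (\<phi> (inv\<^bsub>G\<^esub> g) (e j)))"
    using e_pi g i phi_inv2 e_in j by simp
  also have "\<dots> \<longleftrightarrow> col (e i) (\<phi> (inv\<^bsub>G\<^esub> g) (e j))"
    using col_phi g e_in i j phi_in gi by blast
  also have "\<dots> \<longleftrightarrow> col (e i) (e (pi (inv\<^bsub>G\<^esub> g) j))" using e_pi gi j by simp
  finally show ?thesis unfolding am_def by simp
qed

lemma F_pi: assumes g: "g \<in> carrier G" and i: "i < v" and j: "j < v"
  shows "F (pi g i) j = F i (pi (inv\<^bsub>G\<^esub> g) j)"
  unfolding F_def dl_def using am_pi[OF g i j] pi_inv_eq[OF g i j] by simp

lemma sum_FF_pi: assumes g: "g \<in> carrier G" and h: "h \<in> carrier G" and i: "i < v" and j: "j < v"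
  shows "(\<Sum>l<v. F (pi h i) l * F (pi g l) j) = F (pi (g \<otimes>\<^bsub>G\<^esub> h) i) j"
proof -
  have gi: "inv\<^bsub>G\<^esub> g \<in> carrier G" using grp g by (simp add: group.inv_closed)
  have "(\<Sum>l<v. F (pi h i) l * F (pi g l) j) = (\<Sum>l<v. F (pi h i) l * F l (pi (inv\<^bsub>G\<^esub> g) j))"
    using F_pi[OF g _ j] by simp
  also have "\<dots> = F (pi h i) (pi (inv\<^bsub>G\<^esub> g) j)"
    by (rule FF[OF pi_lt[OF h i] pi_lt[OF gi j] s1])
  also have "\<dots> = F (pi g (pi h i)) j" using F_pi[OF g pi_lt[OF h i] j] by simp
  also have "\<dots> = F (pi (g \<otimes>\<^bsub>G\<^esub> h) i) j" using pi_comp[OF g h i] by simp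
  finally show ?thesis .
qed

definition Xm :: "'g \<Rightarrow> rat mat" where "Xm g = mat v v (\<lambda>(i,j). F (pi g i) j)"

lemma Xm_carrier: "Xm g \<in> carrier_mat v v" unfolding Xm_def by simp

lemma Xm_mult: assumes g: "g \<in> carrier G" and h: "h \<in> carrier G"
  shows "Xm h * Xm g = Xm (g \<otimes>\<^bsub>G\<^esub> h)"
proof (rule eq_matI)
  fix i j assume i: "i < dim_row (Xm (g \<otimes>\<^bsub>G\<^esub> h))" and j: "j < dim_col (Xm (g \<otimes>\<^bsub>G\<^esub> h))"
  then have i: "i < v" and j: "j < v" unfolding Xm_def by auto
  have "(Xm h * Xm g) $$ (i, j) = (\<Sum>l<v. F (pi h i) l * F (pi g l) j)"
    using i j unfolding Xm_def by (simp add: scalar_prod_def atLeast0LessThan)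
  also have "\<dots> = Xm (g \<otimes>\<^bsub>G\<^esub> h) $$ (i, j)" using sum_FF_pi[OF g h i j] i j unfolding Xm_def by simp
  finally show "(Xm h * Xm g) $$ (i, j) = Xm (g \<otimes>\<^bsub>G\<^esub> h) $$ (i, j)" .
qed (auto simp: Xm_def)

lemma Xm_pow: assumes g: "g \<in> carrier G"
  shows "Xm g ^\<^sub>m Suc m = Xm (g [^]\<^bsub>G\<^esub> Suc m)"
proof (induction m)
  case 0
  have "Xm g ^\<^sub>m Suc 0 = Xm g" using Xm_carrier[of g] by simp
  then show ?case using g grp by (simp add: group.is_monoid monoid.l_one)
next
  case (Suc m)
  have gm: "g [^]\<^bsub>G\<^esub> Suc m \<in> carrier G" by (rule monoid.nat_pow_closed[OF group.is_monoid[OF grp] g])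
  have "Xm g ^\<^sub>m Suc (Suc m) = Xm (g [^]\<^bsub>G\<^esub> Suc m) * Xm g" using Suc by simp
  also have "\<dots> = Xm (g \<otimes>\<^bsub>G\<^esub> (g [^]\<^bsub>G\<^esub> Suc m))" by (rule Xm_mult[OF g gm])
  also have "g \<otimes>\<^bsub>G\<^esub> (g [^]\<^bsub>G\<^esub> Suc m) = g [^]\<^bsub>G\<^esub> Suc (Suc m)"
    by (rule monoid.nat_pow_Suc2[OF group.is_monoid[OF grp] g, symmetric])
  finally show ?case .
qed

end

context gqa
begin

lemma G_bij: assumes x: "x \<in> P" shows "bij_betw (\<lambda>g. \<phi> g x) (carrier G) P"
proof (rule bij_betw_imageI)
  show "inj_on (\<lambda>g. \<phi> g x) (carrier G)"
  proof (rule inj_onI)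
    fix g h assume g: "g \<in> carrier G" and h: "h \<in> carrier G" and e: "\<phi> g x = \<phi> h x"
    have hi: "inv\<^bsub>G\<^esub> h \<in> carrier G" using grp h by (simp add: group.inv_closed)
    have m: "inv\<^bsub>G\<^esub> h \<otimes>\<^bsub>G\<^esub> g \<in> carrier G" using grp hi g by (simp add: group.subgroupE(4) group.subgroup_self)
    have "\<phi> (inv\<^bsub>G\<^esub> h \<otimes>\<^bsub>G\<^esub> g) x = x" using phi_mult[OF hi g x] e phi_inv[OF h x] by simp
    then have "inv\<^bsub>G\<^esub> h \<otimes>\<^bsub>G\<^esub> g \<in> stabilizer G \<phi> x" using m unfolding stabilizer_def by simp
    then have "inv\<^bsub>G\<^esub> h \<otimes>\<^bsub>G\<^esub> g = \<one>\<^bsub>G\<^esub>" using stab[OF x] by simp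
    then show "g = h" using grp g h by (metis group.inv_comm group.inv_equality group.inv_inv hi)
  qed
  show "(\<lambda>g. \<phi> g x) ` carrier G = P"
  proof
    show "(\<lambda>g. \<phi> g x) ` carrier G \<subseteq> P" using phi_in x by auto
    show "P \<subseteq> (\<lambda>g. \<phi> g x) ` carrier G"
      using transitive_action.unique_orbit[OF ta x] by blast
  qed
qed

lemma card_G: "card (carrier G) = v"
  using bij_betw_same_card[OF G_bij[OF e_in[OF v_pos]]] unfolding v_def by simp
lemma fin_G: "finite (carrier G)"
  using bij_betw_finite[OF G_bij[OF e_in[OF v_pos]]] finite_P by simp
lemma order_G: "Coset.order G = v" using card_G unfolding Coset.order_def .

lemma Xm_fix: assumes g: "g \<in> carrier G" shows "Xm g ^\<^sub>m Suc v = Xm g"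
proof -
  have "Xm g ^\<^sub>m Suc v = Xm (g [^]\<^bsub>G\<^esub> Suc v)" by (rule Xm_pow[OF g])
  also have "g [^]\<^bsub>G\<^esub> Suc v = g [^]\<^bsub>G\<^esub> v \<otimes>\<^bsub>G\<^esub> g" by simp
  also have "g [^]\<^bsub>G\<^esub> v = \<one>\<^bsub>G\<^esub>" using group.pow_order_eq_1[OF grp g] order_G by simp
  also have "\<one>\<^bsub>G\<^esub> \<otimes>\<^bsub>G\<^esub> g = g" using grp g by (simp add: group.is_monoid monoid.l_one)
  finally show ?thesis .
qed

definition gc :: "'g \<Rightarrow> nat" where "gc g = card {x\<in>P. col (\<phi> g x) x}"

lemma mtr_Xm: assumes g: "g \<in> carrier G" and g1: "g \<noteq> \<one>\<^bsub>G\<^esub>"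
  shows "mtr (Xm g) = iQ * (of_nat (gc g) - (kq + Tq))"
proof -
  have nfix: "pi g i \<noteq> i" if i: "i < v" for i
  proof
    assume "pi g i = i"
    then have "\<phi> g (e i) = e i" using e_pi[OF g i] by simp
    then have "g \<in> stabilizer G \<phi> (e i)" using g unfolding stabilizer_def by simp
    then show False using stab[OF e_in[OF i]] g1 by simp
  qed
  have "mtr (Xm g) = (\<Sum>i<v. F (pi g i) i)" unfolding mtr_def Xm_def by simp
  also have "\<dots> = (\<Sum>i<v. iQ * (am (pi g i) i - cq))"
    using nfix unfolding F_def dl_def by (intro sum.cong) (auto simp: algebra_simps)
  also have "\<dots> = iQ * ((\<Sum>i<v. am (pi g i) i) - of_nat v * cq)"
    by (simp add: sum_distrib_left[symmetric] sum_subtractf)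
  also have "(\<Sum>i<v. am (pi g i) i) = (\<Sum>i<v. if col (\<phi> g (e i)) (e i) then (1::rat) else 0)"
    using e_pi[OF g] unfolding am_def by (intro sum.cong) auto
  also have "\<dots> = (\<Sum>x\<in>P. if col (\<phi> g x) x then (1::rat) else 0)"
    by (rule sum_P)
  also have "\<dots> = of_nat (gc g)" unfolding gc_def by (rule sum_if_card[OF finite_P])
  also have "of_nat v * cq = kq + Tq" unfolding cq_def using v_pos by simp
  finally show ?thesis .
qed

lemma gc_div: assumes g: "g \<in> carrier G" and g1: "g \<noteq> \<one>\<^bsub>G\<^esub>"
  shows "\<exists>z::int. int (gc g) - int (s * (t + 1) + t + 1) = int (s + t) * z"
proof -
  have "mtr (Xm g) \<in> \<int>" by (rule trace_integral[OF Xm_carrier _ Xm_fix[OF g]]) (use v_pos in auto)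
  then obtain z where z: "mtr (Xm g) = of_int z" by (auto elim: Ints_cases)
  have Qpos: "(of_nat s + of_nat t :: rat) > 0" using s1 by simp
  have "of_nat (gc g) - (kq + Tq) = (of_nat s + of_nat t) * of_int z"
    using z mtr_Xm[OF g g1] Qpos unfolding iQ_def by (simp add: field_simps)
  then have "(of_int (int (gc g) - int (s * (t + 1) + t + 1)) :: rat) = of_int (int (s + t) * z)"
    unfolding kq_def Tq_def by simp
  then show ?thesis using of_int_eq_iff by blast
qed

end

lemma even_sum_inv:
  fixes f :: "'a \<Rightarrow> int"
  assumes "finite S" and "\<forall>x\<in>S. \<sigma> x \<in> S \<and> \<sigma> x \<noteq> x \<and> \<sigma> (\<sigma> x) = x \<and> f (\<sigma> x) = f x"
  shows "even (\<Sum>x\<in>S. f x)"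
  using assms
proof (induction "card S" arbitrary: S rule: less_induct)
  case less
  show ?case
  proof (cases "S = {}")
    case True
    then show ?thesis by simp
  next
    case False
    then obtain x where x: "x \<in> S" by blast
    have sx: "\<sigma> x \<in> S" "\<sigma> x \<noteq> x" "f (\<sigma> x) = f x" using less.prems(2) x by auto
    define S' where "S' = S - {x} - {\<sigma> x}"
    have fin: "finite S'" using less.prems(1) unfolding S'_def by simp
    have cardlt: "card S' < card S" unfolding S'_def using x less.prems(1)
      by (meson Diff_subset card_Diff1_less dual_order.strict_trans2 card_mono finite_Diff)
    have pres: "\<forall>y\<in>S'. \<sigma> y \<in> S' \<and> \<sigma> y \<noteq> y \<and> \<sigma> (\<sigma> y) = y \<and> f (\<sigma> y) = f y"
    proof
      fix y assume y: "y \<in> S'"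
      then have yS: "y \<in> S" "y \<noteq> x" "y \<noteq> \<sigma> x" unfolding S'_def by auto
      have p: "\<sigma> y \<in> S" "\<sigma> y \<noteq> y" "\<sigma> (\<sigma> y) = y" "f (\<sigma> y) = f y" using less.prems(2) yS(1) by auto
      have "\<sigma> y \<noteq> x" using p(3) yS(3) by auto
      moreover have "\<sigma> y \<noteq> \<sigma> x" using p(3) yS(2) less.prems(2) x by metis
      ultimately show "\<sigma> y \<in> S' \<and> \<sigma> y \<noteq> y \<and> \<sigma> (\<sigma> y) = y \<and> f (\<sigma> y) = f y"
        using p unfolding S'_def by auto
    qed
    have IH: "even (\<Sum>y\<in>S'. f y)" using less.hyps[OF cardlt fin pres] .
    have "(\<Sum>y\<in>S. f y) = f x + (\<Sum>y\<in>S - {x}. f y)"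
      using less.prems(1) x by (simp add: sum.remove)
    also have "(\<Sum>y\<in>S - {x}. f y) = f (\<sigma> x) + (\<Sum>y\<in>S'. f y)"
      unfolding S'_def using less.prems(1) sx by (subst sum.remove[of _ "\<sigma> x"]) auto
    finally have "(\<Sum>y\<in>S. f y) = 2 * f x + (\<Sum>y\<in>S'. f y)" using sx by simp
    then show ?thesis using IH by simp
  qed
qed

lemma card_sum_nat: "finite A \<Longrightarrow> card {x\<in>A. Q x} = (\<Sum>x\<in>A. if Q x then 1 else (0::nat))"
  using sum.inter_filter[of A "\<lambda>_. (1::nat)" Q] by simp

context gqa
begin

lemma sum_gc: "(\<Sum>g\<in>carrier G. gc g) = v * (s * (t + 1))"
proof -
  have "(\<Sum>g\<in>carrier G. gc g) = (\<Sum>g\<in>carrier G. \<Sum>x\<in>P. if col (\<phi> g x) x then 1 else (0::nat))"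
    unfolding gc_def using finite_P by (simp add: card_sum_nat)
  also have "\<dots> = (\<Sum>x\<in>P. \<Sum>g\<in>carrier G. if col (\<phi> g x) x then 1 else (0::nat))"
    by (rule sum.swap)
  also have "\<dots> = (\<Sum>x\<in>P. s * (t + 1))"
  proof (rule sum.cong)
    fix x assume x: "x \<in> P"
    have "(\<Sum>g\<in>carrier G. if col (\<phi> g x) x then 1 else (0::nat)) = (\<Sum>y\<in>P. if col y x then 1 else (0::nat))"
      using sum.reindex_bij_betw[OF G_bij[OF x], of "\<lambda>y. if col y x then 1 else (0::nat)"] by simp
    also have "\<dots> = card {y\<in>P. col y x}" using finite_P by (simp add: card_sum_nat)
    also have "{y\<in>P. col y x} = {y\<in>P. col x y}" using col_sym by blast
    also have "card \<dots> = s * (t + 1)" by (rule neighbours_card[OF x])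
    finally show "(\<Sum>g\<in>carrier G. if col (\<phi> g x) x then 1 else (0::nat)) = s * (t + 1)" .
  qed simp
  also have "\<dots> = v * (s * (t + 1))" unfolding v_def by simp
  finally show ?thesis .
qed

lemma gc_one: "gc \<one>\<^bsub>G\<^esub> = 0"
proof -
  have "{x\<in>P. col (\<phi> \<one>\<^bsub>G\<^esub> x) x} = {}" using phi_one col_irrefl by auto
  then show ?thesis unfolding gc_def by (metis card.empty)
qed

lemma gc_inv: assumes g: "g \<in> carrier G" shows "gc (inv\<^bsub>G\<^esub> g) = gc g"
proof -
  have gi: "inv\<^bsub>G\<^esub> g \<in> carrier G" using grp g by (simp add: group.inv_closed)
  have eq: "{y\<in>P. col (\<phi> (inv\<^bsub>G\<^esub> g) y) y} = \<phi> g ` {x\<in>P. col (\<phi> g x) x}"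
  proof
    show "{y\<in>P. col (\<phi> (inv\<^bsub>G\<^esub> g) y) y} \<subseteq> \<phi> g ` {x\<in>P. col (\<phi> g x) x}"
    proof
      fix y assume y: "y \<in> {y\<in>P. col (\<phi> (inv\<^bsub>G\<^esub> g) y) y}"
      let ?x = "\<phi> (inv\<^bsub>G\<^esub> g) y"
      have "?x \<in> P" using y phi_in gi by auto
      moreover have "\<phi> g ?x = y" using phi_inv2 g y by auto
      moreover have "col (\<phi> g ?x) ?x" using y col_sym \<open>\<phi> g ?x = y\<close> by auto
      ultimately show "y \<in> \<phi> g ` {x\<in>P. col (\<phi> g x) x}" by force
    qed
    show "\<phi> g ` {x\<in>P. col (\<phi> g x) x} \<subseteq> {y\<in>P. col (\<phi> (inv\<^bsub>G\<^esub> g) y) y}"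
      using phi_in[OF g] phi_inv[OF g] col_sym by auto
  qed
  have "inj_on (\<phi> g) {x\<in>P. col (\<phi> g x) x}" using phi_inj[OF g] by (auto intro: inj_onI)
  then show ?thesis unfolding gc_def eq by (simp add: card_image)
qed

lemma inv_ne:
  assumes odd: "odd v" and g: "g \<in> carrier G" and g1: "g \<noteq> \<one>\<^bsub>G\<^esub>"
  shows "inv\<^bsub>G\<^esub> g \<noteq> g"
proof
  assume ig: "inv\<^bsub>G\<^esub> g = g"
  have mon: "monoid G" using grp by (simp add: group.is_monoid)
  have gg: "g [^]\<^bsub>G\<^esub> (2::nat) = \<one>\<^bsub>G\<^esub>"
  proof -
    have "g \<otimes>\<^bsub>G\<^esub> g = \<one>\<^bsub>G\<^esub>" using group.r_inv[OF grp g] ig by simp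
    then show ?thesis using g by (simp add: numeral_2_eq_2 monoid.l_one[OF mon])
  qed
  obtain m where m: "v = Suc (2 * m)" using odd by (metis oddE Suc_eq_plus1 mult_2)
  have "g [^]\<^bsub>G\<^esub> v = (g [^]\<^bsub>G\<^esub> (2::nat)) [^]\<^bsub>G\<^esub> m \<otimes>\<^bsub>G\<^esub> g"
    unfolding m using g by (simp add: monoid.nat_pow_pow[OF mon])
  also have "\<dots> = g" using gg g by (simp add: monoid.l_one[OF mon] monoid.nat_pow_one[OF mon])
  finally have "g [^]\<^bsub>G\<^esub> v = g" .
  moreover have "g [^]\<^bsub>G\<^esub> v = \<one>\<^bsub>G\<^esub>" using group.pow_order_eq_1[OF grp g] order_G by simp
  ultimately show False using g1 by simp
qed

end

theorem mainTheorem14: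
  fixes q :: nat
    and P :: "'p set" and L :: "'l set" and I :: "'p \<Rightarrow> 'l \<Rightarrow> bool"
    and G :: "('g, 'b) monoid_scheme"
    and \<phi> :: "'g \<Rightarrow> 'p \<Rightarrow> 'p" and \<psi> :: "'g \<Rightarrow> 'l \<Rightarrow> 'l"
  assumes "even q" and "q \<ge> 2"
    and "gen_quadrangle P L I q (q^2 - q)"
    and "collineation_action G P L I \<phi> \<psi>"
    and "regular_on_points G P \<phi>"
  shows False
proof -
  interpret gqa P L I q "q^2 - q" G \<phi> \<psi>
    by (unfold_locales) (use assms in auto)
  define t where "t = q^2 - q"
  define k where "k = q * (t + 1)"
  define K where "K = k + t + 1"
  have qq: "q \<le> q^2" by (simp add: power2_eq_square)
  have vf: "v = (q + 1) * (q * t + 1)" using v_formula s1 unfolding t_def by simp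
  have oddv: "odd v" unfolding vf using assms(1) by simp
  define S where "S = carrier G - {\<one>\<^bsub>G\<^esub>}"
  have oneG: "\<one>\<^bsub>G\<^esub> \<in> carrier G" using grp by (simp add: group.is_monoid monoid.one_closed)
  have finS: "finite S" unfolding S_def using fin_G by simp
  define Qi :: int where "Qi = int (q + t)"
  define D where "D g = int (gc g) - int K" for g
  have Ddiv: "\<exists>z. D g = Qi * z" if g: "g \<in> S" for g
    using gc_div[of g] g unfolding S_def D_def Qi_def K_def k_def t_def by auto
  define w where "w g = (SOME z. D g = Qi * z)" for g
  have Dw: "D g = Qi * w g" if g: "g \<in> S" for g
    unfolding w_def using someI_ex[OF Ddiv[OF g]] .
  have Qi0: "Qi \<noteq> 0" unfolding Qi_def using assms(2) by simp
  have invS: "inv\<^bsub>G\<^esub> g \<in> S" if g: "g \<in> S" for g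
    using g grp unfolding S_def by (auto simp: group.inv_closed group.inv_eq_1_iff)
  have weq: "w (inv\<^bsub>G\<^esub> g) = w g" if g: "g \<in> S" for g
  proof -
    have "D (inv\<^bsub>G\<^esub> g) = D g" unfolding D_def using gc_inv g unfolding S_def by simp
    then have "Qi * w (inv\<^bsub>G\<^esub> g) = Qi * w g" using Dw[OF g] Dw[OF invS[OF g]] by simp
    then show ?thesis using Qi0 by simp
  qed
  have ev: "even (\<Sum>g\<in>S. w g)"
  proof (rule even_sum_inv[OF finS, of "\<lambda>g. inv\<^bsub>G\<^esub> g"], intro ballI conjI)
    fix g assume g: "g \<in> S"
    show "inv\<^bsub>G\<^esub> g \<in> S" by (rule invS[OF g])
    show "inv\<^bsub>G\<^esub> g \<noteq> g" using inv_ne[OF oddv] g unfolding S_def by simp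
    show "inv\<^bsub>G\<^esub> (inv\<^bsub>G\<^esub> g) = g" using g grp unfolding S_def by (simp add: group.inv_inv)
    show "w (inv\<^bsub>G\<^esub> g) = w g" by (rule weq[OF g])
  qed
  have sumS: "(\<Sum>g\<in>S. gc g) = v * k"
  proof -
    have "(\<Sum>g\<in>carrier G. gc g) = gc \<one>\<^bsub>G\<^esub> + (\<Sum>g\<in>S. gc g)"
      unfolding S_def using fin_G oneG by (simp add: sum.remove)
    then show ?thesis using sum_gc gc_one unfolding k_def t_def by simp
  qed
  have cardS: "card S = v - 1" unfolding S_def using card_G oneG fin_G by simp
  have "Qi * (\<Sum>g\<in>S. w g) = (\<Sum>g\<in>S. D g)"
    using Dw by (simp add: sum_distrib_left)
  also have "\<dots> = int (\<Sum>g\<in>S. gc g) - int (card S) * int K"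
    unfolding D_def by (simp add: sum_subtractf of_nat_sum)
  also have "\<dots> = int v * int k - (int v - 1) * int K"
    unfolding sumS cardS using v_pos by (simp add: of_nat_diff)
  finally have eq: "Qi * (\<Sum>g\<in>S. w g) = int v * int k - (int v - 1) * int K" .
  define Q where "Q = int q"
  have tq: "int t = Q^2 - Q" unfolding t_def Q_def using qq by (simp add: of_nat_diff)
  have Qiq: "Qi = Q^2" unfolding Qi_def Q_def t_def using qq by simp
  have vq0: "int v = (Q + 1) * (Q * int t + 1)" unfolding vf Q_def by (simp add: algebra_simps)
  have vq: "int v = (Q + 1) * (Q * (Q^2 - Q) + 1)" unfolding vq0 tq ..
  have kq0: "int k = Q * (int t + 1)" unfolding k_def Q_def by (simp add: algebra_simps)
  have kq': "int k = Q * (Q^2 - Q + 1)" unfolding kq0 tq ..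
  have Kq0: "int K = int k + int t + 1" unfolding K_def by simp
  have Kq: "int K = Q * (Q^2 - Q + 1) + (Q^2 - Q) + 1" unfolding Kq0 kq' tq ..
  have "int v * int k - (int v - 1) * int K = Q^2 * (- ((Q^3 + 1) * (Q - 1)))"
    unfolding vq kq' Kq by (simp add: algebra_simps power2_eq_square power3_eq_cube)
  then have "Q^2 * (\<Sum>g\<in>S. w g) = Q^2 * (- ((Q^3 + 1) * (Q - 1)))" using eq Qiq by simp
  moreover have "Q^2 \<noteq> 0" using Qi0 Qiq by simp
  ultimately have "(\<Sum>g\<in>S. w g) = - ((Q^3 + 1) * (Q - 1))" using mult_left_cancel by blast
  moreover have "even Q" unfolding Q_def using assms(1) by simp
  ultimately show False using ev by simp
qed

end
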